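(* Consider a single transmission ($L=1$) over the Rayleigh block-fading Gaussian wiretap channel, with mean SNRs $\gamma_{\textsf{d}}>0$ (legitimate decoder) and $\gamma_{\textsf{e}}>0$ (eavesdropper), and constraints $\xi_{\sf{c}},\xi_{\sf{s}}\in(0,1)$. (i) There exist rates $\textsf{R}\ge0$ and $\textsf{R}_1\ge0$ with $\mathcal{P}_{\sf{co}}\le\xi_{\sf{c}}$ and $\mathcal{P}_{\sf{so}}\le\xi_{\sf{s}}$ if and only if $\xi_{\sf{s}}\ge(1-\xi_{\sf{c}})^{\gamma_{\textsf{d}}/\gamma_{\textsf{e}}}$, equivalently $\xi_{\sf{s}}^{\gamma_{\textsf{e}}}-(1-\xi_{\sf{c}})^{\gamma_{\textsf{d}}}\ge0$. (ii) For a fixed $\textsf{R}\ge0$, there exists $\textsf{R}_1\ge0$ with $\mathcal{P}_{\sf{co}}\le\xi_{\sf{c}}$ and $\mathcal{P}_{\sf{so}}\le\xi_{\sf{s}}$ if and only if $$\textsf{R}\le\log_2\Big(\frac{1-\gamma_{\textsf{d}}\ln(1-\xi_{\sf{c}})}{1-\gamma_{\textsf{e}}\ln(\xi_{\sf{s}})}\Big).$$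
   Context: Channel: $Y=h_{\textsf{d}}X+N_{\textsf{d}}$, $Z=h_{\textsf{e}}X+N_{\textsf{e}}$ with unit-variance Gaussian noises and input power $1$. $\textsf{SNR}_{\textsf{d}}=|h_{\textsf{d}}|^2$ and $\textsf{SNR}_{\textsf{e}}=|h_{\textsf{e}}|^2$ are independent exponential random variables with means $\gamma_{\textsf{d}}$ and $\gamma_{\textsf{e}}$ (CDF $1-e^{-x/\gamma}$ for $x\ge0$). Mutual informations: $I(X;Y)=\log_2(1+\textsf{SNR}_{\textsf{d}})$, $I(X;Z)=\log_2(1+\textsf{SNR}_{\textsf{e}})$. With secrecy rate $\textsf{R}$ and dummy-message rate $\textsf{R}_1$, the connection outage probability is $\mathcal{P}_{\sf{co}}=\mathcal{P}(\textsf{R}+\textsf{R}_1>\log_2(1+\textsf{SNR}_{\textsf{d}}))$ and the secrecy outage probability is $\mathcal{P}_{\sf{so}}=\mathcal{P}(\textsf{R}_1<\log_2(1+\textsf{SNR}_{\textsf{e}}))$. *)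

theory Defs
  imports "HOL-Probability.Probability"
begin

definition snr_dist :: "real \<Rightarrow> real measure" where
  "snr_dist \<gamma> = density lborel (exponential_density (1 / \<gamma>))"

definition P_co :: "real \<Rightarrow> real \<Rightarrow> real \<Rightarrow> real" where
  "P_co \<gamma>d R R1 = measure (snr_dist \<gamma>d) {x. R + R1 > log 2 (1 + x)}"

definition P_so :: "real \<Rightarrow> real \<Rightarrow> real" where
  "P_so \<gamma>e R1 = measure (snr_dist \<gamma>e) {x. R1 < log 2 (1 + x)}"

end

theory Submission imports Defs begin

lemma snr_prob_space: "\<gamma> > 0 \<Longrightarrow> prob_space (snr_dist \<gamma>)"
  unfolding snr_dist_def by (rule prob_space_exponential_density) simp

lemma snr_distributed: "\<gamma> > 0 \<Longrightarrow> distributed (snr_dist \<gamma>) lborel (\<lambda>x. x) (exponential_density (1/\<gamma>))"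
  unfolding distributed_def snr_dist_def
  by (auto simp: distr_id2)

lemma snr_sets[simp]: "sets (snr_dist \<gamma>) = sets borel"
  unfolding snr_dist_def by simp

lemma snr_space[simp]: "space (snr_dist \<gamma>) = UNIV"
  unfolding snr_dist_def by simp

lemma snr_AE: "\<gamma> > 0 \<Longrightarrow> AE x in snr_dist \<gamma>. 0 \<le> x \<and> x \<noteq> c"
proof -
  have "AE x in lborel. x \<noteq> c" by (rule AE_lborel_singleton)
  then have "AE x in lborel. 0 < ennreal (exponential_density (1 / \<gamma>) x) \<longrightarrow> 0 \<le> x \<and> x \<noteq> c"
    by eventually_elim (auto simp: exponential_density_def split: if_splits)
  then show ?thesis unfolding snr_dist_def
    by (subst AE_density) auto
qed

lemma snr_le: assumes "\<gamma> > 0" "0 \<le> a"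
  shows "measure (snr_dist \<gamma>) {x. x \<le> a} = 1 - exp (- a / \<gamma>)"
proof -
  interpret prob_space "snr_dist \<gamma>" using snr_prob_space assms by blast
  have "\<P>(x in snr_dist \<gamma>. x \<le> a) = 1 - exp (- a * (1/\<gamma>))"
    by (rule exponential_distributedD_le[OF snr_distributed]) (use assms in auto)
  then show ?thesis by simp
qed

lemma snr_gt: assumes "\<gamma> > 0" "0 \<le> a"
  shows "measure (snr_dist \<gamma>) {x. a < x} = exp (- a / \<gamma>)"
proof -
  interpret prob_space "snr_dist \<gamma>" using snr_prob_space assms by blast
  have "\<P>(x in snr_dist \<gamma>. a < x) = exp (- a * (1/\<gamma>))"
    by (rule exponential_distributedD_gt[OF snr_distributed]) (use assms in auto)
  then show ?thesis by simp
qed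

lemma P_co_eq: assumes "\<gamma> > 0" "0 \<le> s"
  shows "measure (snr_dist \<gamma>) {x. s > log 2 (1 + x)} = 1 - exp (- (2 powr s - 1) / \<gamma>)"
proof -
  have c: "0 \<le> 2 powr s - 1" using assms ge_one_powr_ge_zero[of 2 s] by simp
  have "measure (snr_dist \<gamma>) {x. s > log 2 (1 + x)} = measure (snr_dist \<gamma>) {x. x \<le> 2 powr s - 1}"
  proof (rule measure_eq_AE)
    show "AE x in snr_dist \<gamma>. (x \<in> {x. s > log 2 (1 + x)}) = (x \<in> {x. x \<le> 2 powr s - 1})"
      using snr_AE[OF assms(1), of "2 powr s - 1"]
      by eventually_elim (auto simp: log_less_iff)
  qed auto
  then show ?thesis using snr_le[OF assms(1) c] by simp
qed

lemma P_so_eq: assumes "\<gamma> > 0" "0 \<le> s"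
  shows "measure (snr_dist \<gamma>) {x. s < log 2 (1 + x)} = exp (- (2 powr s - 1) / \<gamma>)"
proof -
  have c: "0 \<le> 2 powr s - 1" using assms ge_one_powr_ge_zero[of 2 s] by simp
  have "measure (snr_dist \<gamma>) {x. s < log 2 (1 + x)} = measure (snr_dist \<gamma>) {x. 2 powr s - 1 < x}"
  proof (rule measure_eq_AE)
    show "AE x in snr_dist \<gamma>. (x \<in> {x. s < log 2 (1 + x)}) = (x \<in> {x. 2 powr s - 1 < x})"
      using snr_AE[OF assms(1), of "2 powr s - 1"]
      by eventually_elim (auto simp: less_log_iff)
  qed auto
  then show ?thesis using snr_gt[OF assms(1) c] by simp
qed

lemma co_iff: assumes "\<gamma>d > 0" "0 < \<xi>c" "\<xi>c < 1" "0 \<le> R" "0 \<le> R1"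
  shows "P_co \<gamma>d R R1 \<le> \<xi>c \<longleftrightarrow> 2 powr (R + R1) \<le> 1 - \<gamma>d * ln (1 - \<xi>c)"
proof -
  define E where "E = - (2 powr (R+R1) - 1) / \<gamma>d"
  have eq: "P_co \<gamma>d R R1 = 1 - exp E"
    unfolding P_co_def E_def using P_co_eq[OF assms(1), of "R+R1"] assms by simp
  have el: "exp (ln (1 - \<xi>c)) = 1 - \<xi>c" using assms by simp
  have "P_co \<gamma>d R R1 \<le> \<xi>c \<longleftrightarrow> exp (ln (1 - \<xi>c)) \<le> exp E"
    unfolding eq el by linarith
  also have "\<dots> \<longleftrightarrow> ln (1 - \<xi>c) \<le> E" by simp
  also have "\<dots> \<longleftrightarrow> \<gamma>d * ln (1 - \<xi>c) \<le> - (2 powr (R+R1) - 1)"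
    unfolding E_def using assms by (simp add: field_simps)
  also have "\<dots> \<longleftrightarrow> 2 powr (R + R1) \<le> 1 - \<gamma>d * ln (1 - \<xi>c)" by linarith
  finally show ?thesis .
qed

lemma so_iff: assumes "\<gamma>e > 0" "0 < \<xi>s" "\<xi>s < 1" "0 \<le> R1"
  shows "P_so \<gamma>e R1 \<le> \<xi>s \<longleftrightarrow> 1 - \<gamma>e * ln \<xi>s \<le> 2 powr R1"
proof -
  define E where "E = - (2 powr R1 - 1) / \<gamma>e"
  have eq: "P_so \<gamma>e R1 = exp E"
    unfolding P_so_def E_def using P_so_eq[OF assms(1), of "R1"] assms by simp
  have el: "exp (ln \<xi>s) = \<xi>s" using assms by simp
  have "P_so \<gamma>e R1 \<le> \<xi>s \<longleftrightarrow> exp E \<le> exp (ln \<xi>s)"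
    unfolding eq el by linarith
  also have "\<dots> \<longleftrightarrow> E \<le> ln \<xi>s" by simp
  also have "\<dots> \<longleftrightarrow> - (2 powr R1 - 1) \<le> \<gamma>e * ln \<xi>s"
    unfolding E_def using assms by (simp add: field_simps)
  also have "\<dots> \<longleftrightarrow> 1 - \<gamma>e * ln \<xi>s \<le> 2 powr R1" by linarith
  finally show ?thesis .
qed

lemma feas_iff: assumes "\<gamma>d > 0" "\<gamma>e > 0" "0 < \<xi>c" "\<xi>c < 1" "0 < \<xi>s" "\<xi>s < 1" "0 \<le> R"
  shows "(\<exists>R1\<ge>0. P_co \<gamma>d R R1 \<le> \<xi>c \<and> P_so \<gamma>e R1 \<le> \<xi>s) \<longleftrightarrow>
     2 powr R * (1 - \<gamma>e * ln \<xi>s) \<le> 1 - \<gamma>d * ln (1 - \<xi>c)"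
    (is "?L \<longleftrightarrow> 2 powr R * ?B \<le> ?A")
proof
  assume ?L
  then obtain R1 where R1: "R1 \<ge> 0" "2 powr (R + R1) \<le> ?A" "?B \<le> 2 powr R1"
    using co_iff so_iff assms by blast
  have "2 powr R * ?B \<le> 2 powr R * 2 powr R1" using R1 by (simp add: mult_left_mono)
  also have "\<dots> = 2 powr (R + R1)" by (simp add: powr_add)
  finally show "2 powr R * ?B \<le> ?A" using R1 by linarith
next
  assume h: "2 powr R * ?B \<le> ?A"
  have lnn: "ln \<xi>s < 0" using assms by simp
  have B1: "1 \<le> ?B" using mult_pos_neg[OF assms(2) lnn] by simp
  define R1 where "R1 = log 2 ?B"
  have R1: "R1 \<ge> 0" "2 powr R1 = ?B" using B1 unfolding R1_def by auto
  have "2 powr (R + R1) \<le> ?A" using h R1 by (simp add: powr_add)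
  then show ?L using R1 co_iff so_iff assms by (intro exI[of _ R1]) auto
qed
theorem theorem2:
  fixes \<gamma>d \<gamma>e \<xi>c \<xi>s :: real
  assumes "\<gamma>d > 0" and "\<gamma>e > 0"
    and "0 < \<xi>c" and "\<xi>c < 1" and "0 < \<xi>s" and "\<xi>s < 1"
  shows "((\<exists>R\<ge>0. \<exists>R1\<ge>0. P_co \<gamma>d R R1 \<le> \<xi>c \<and> P_so \<gamma>e R1 \<le> \<xi>s)
            \<longleftrightarrow> \<xi>s \<ge> (1 - \<xi>c) powr (\<gamma>d / \<gamma>e))
      \<and> ((\<exists>R\<ge>0. \<exists>R1\<ge>0. P_co \<gamma>d R R1 \<le> \<xi>c \<and> P_so \<gamma>e R1 \<le> \<xi>s)
            \<longleftrightarrow> \<xi>s powr \<gamma>e - (1 - \<xi>c) powr \<gamma>d \<ge> 0)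
      \<and> (\<forall>R\<ge>0. (\<exists>R1\<ge>0. P_co \<gamma>d R R1 \<le> \<xi>c \<and> P_so \<gamma>e R1 \<le> \<xi>s)
            \<longleftrightarrow> R \<le> log 2 ((1 - \<gamma>d * ln (1 - \<xi>c)) / (1 - \<gamma>e * ln \<xi>s)))"
proof -
  define A where "A = 1 - \<gamma>d * ln (1 - \<xi>c)"
  define B where "B = 1 - \<gamma>e * ln \<xi>s"
  have lnn: "ln \<xi>s < 0" using assms by simp
  have B1: "1 \<le> B" using mult_pos_neg[OF assms(2) lnn] unfolding B_def by simp
  have A1: "1 \<le> A" using mult_pos_neg[of \<gamma>d "ln (1 - \<xi>c)"] assms unfolding A_def by simp
  have AB: "A / B > 0" using A1 B1 by simp
  have F: "\<And>R. R \<ge> 0 \<Longrightarrow> (\<exists>R1\<ge>0. P_co \<gamma>d R R1 \<le> \<xi>c \<and> P_so \<gamma>e R1 \<le> \<xi>s) \<longleftrightarrow> 2 powr R * B \<le> A"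
    unfolding A_def B_def using feas_iff assms by blast
  have ex: "(\<exists>R\<ge>0. \<exists>R1\<ge>0. P_co \<gamma>d R R1 \<le> \<xi>c \<and> P_so \<gamma>e R1 \<le> \<xi>s) \<longleftrightarrow> B \<le> A"
  proof
    assume "\<exists>R\<ge>0. \<exists>R1\<ge>0. P_co \<gamma>d R R1 \<le> \<xi>c \<and> P_so \<gamma>e R1 \<le> \<xi>s"
    then obtain R where R: "R \<ge> 0" "2 powr R * B \<le> A" using F by blast
    have "1 \<le> 2 powr R" using R ge_one_powr_ge_zero[of 2 R] by simp
    then have "1 * B \<le> 2 powr R * B" using B1 by (intro mult_right_mono) auto
    then show "B \<le> A" using R by simp
  next
    assume "B \<le> A"
    then show "\<exists>R\<ge>0. \<exists>R1\<ge>0. P_co \<gamma>d R R1 \<le> \<xi>c \<and> P_so \<gamma>e R1 \<le> \<xi>s"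
      using F[of 0] by auto
  qed
  have BA: "B \<le> A \<longleftrightarrow> \<gamma>d * ln (1 - \<xi>c) \<le> \<gamma>e * ln \<xi>s"
    unfolding A_def B_def by linarith
  have p1: "(1 - \<xi>c) powr (\<gamma>d / \<gamma>e) = exp (\<gamma>d / \<gamma>e * ln (1 - \<xi>c))"
    using assms by (simp add: powr_def)
  have "\<xi>s \<ge> (1 - \<xi>c) powr (\<gamma>d / \<gamma>e) \<longleftrightarrow> exp (\<gamma>d / \<gamma>e * ln (1 - \<xi>c)) \<le> exp (ln \<xi>s)"
    using assms p1 by simp
  also have "\<dots> \<longleftrightarrow> \<gamma>d / \<gamma>e * ln (1 - \<xi>c) \<le> ln \<xi>s" by simp
  also have "\<dots> \<longleftrightarrow> \<gamma>d * ln (1 - \<xi>c) \<le> \<gamma>e * ln \<xi>s"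
    using assms by (simp add: field_simps)
  finally have i: "\<xi>s \<ge> (1 - \<xi>c) powr (\<gamma>d / \<gamma>e) \<longleftrightarrow> B \<le> A" using BA by simp
  have "\<xi>s powr \<gamma>e - (1 - \<xi>c) powr \<gamma>d \<ge> 0 \<longleftrightarrow> exp (\<gamma>d * ln (1 - \<xi>c)) \<le> exp (\<gamma>e * ln \<xi>s)"
    using assms by (simp add: powr_def)
  also have "\<dots> \<longleftrightarrow> B \<le> A" using BA by simp
  finally have ii: "\<xi>s powr \<gamma>e - (1 - \<xi>c) powr \<gamma>d \<ge> 0 \<longleftrightarrow> B \<le> A" .
  have iii: "\<forall>R\<ge>0. (\<exists>R1\<ge>0. P_co \<gamma>d R R1 \<le> \<xi>c \<and> P_so \<gamma>e R1 \<le> \<xi>s) \<longleftrightarrow> R \<le> log 2 (A / B)"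
  proof (intro allI impI)
    fix R :: real assume R: "R \<ge> 0"
    have "2 powr R * B \<le> A \<longleftrightarrow> 2 powr R \<le> A / B" using B1 by (simp add: pos_le_divide_eq)
    also have "\<dots> \<longleftrightarrow> R \<le> log 2 (A / B)"
      using AB by (simp add: le_log_iff)
    finally show "(\<exists>R1\<ge>0. P_co \<gamma>d R R1 \<le> \<xi>c \<and> P_so \<gamma>e R1 \<le> \<xi>s) \<longleftrightarrow> R \<le> log 2 (A / B)"
      using F[OF R] by simp
  qed
  show ?thesis using ex i ii iii unfolding A_def B_def by blast
qed

end
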